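(* Let $G\subset\mathrm{Diff}(\mathbb C^n,0)$ be an irreducible group having a basic set of generators one of which is tangent to the identity (i.e. has derivative $\mathrm{Id}$ at $0$). Then $G=\{\mathrm{Id}\}$.
   Context: $\mathrm{Diff}(\mathbb C^n,0)$ denotes the group of germs at $0$ of holomorphic diffeomorphisms of $\mathbb C^n$ fixing $0$. A subgroup $G\subset \mathrm{Diff}(\mathbb C^n,0)$ is irreducible if it admits a finite set of generators $f_1,\ldots,f_{\nu+1}$ (a basic set of generators; repetitions allowed) such that (a) $f_1\circ\cdots\circ f_{\nu+1}=\mathrm{Id}$ and (b) for all $i,j$ there is $h\in G$ with $f_i\circ h=h\circ f_j$. *)

theory Defs
  imports "HOL-Analysis.Analysis"
begin

text \<open>Maps of C^n are functions on complex^'n; germs at 0 are handled via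
  representatives together with equality on a neighbourhood of 0.\<close>

definition germ_eq :: "('a::topological_space \<Rightarrow> 'b) \<Rightarrow> ('a \<Rightarrow> 'b) \<Rightarrow> 'a \<Rightarrow> bool" where
  "germ_eq f g a \<longleftrightarrow> eventually (\<lambda>x. f x = g x) (nhds a)"

abbreviation germ_eq0 :: "(complex^'n \<Rightarrow> complex^'n) \<Rightarrow> (complex^'n \<Rightarrow> complex^'n) \<Rightarrow> bool" where
  "germ_eq0 f g \<equiv> germ_eq f g 0"

definition holo_on :: "(complex^'n \<Rightarrow> complex^'m) \<Rightarrow> (complex^'n) set \<Rightarrow> bool" where
  "holo_on f U \<longleftrightarrow> (\<forall>x\<in>U. \<exists>L. (f has_derivative L) (at x) \<and>
       (\<forall>(c::complex) v. L (c *s v) = c *s L v))"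

definition holo_near0 :: "(complex^'n \<Rightarrow> complex^'m) \<Rightarrow> bool" where
  "holo_near0 f \<longleftrightarrow> (\<exists>U. open U \<and> 0 \<in> U \<and> holo_on f U)"

definition diff0 :: "(complex^'n \<Rightarrow> complex^'n) \<Rightarrow> bool" where
  "diff0 f \<longleftrightarrow> f 0 = 0 \<and> holo_near0 f \<and>
     (\<exists>g. g 0 = 0 \<and> holo_near0 g \<and> germ_eq0 (g \<circ> f) id \<and> germ_eq0 (f \<circ> g) id)"

inductive_set words :: "(complex^'n \<Rightarrow> complex^'n) set \<Rightarrow> (complex^'n \<Rightarrow> complex^'n) set"
  for S where
    words_id: "id \<in> words S"
  | words_gen: "s \<in> S \<Longrightarrow> w \<in> words S \<Longrightarrow> s \<circ> w \<in> words S"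
  | words_inv: "s \<in> S \<Longrightarrow> diff0 g \<Longrightarrow> germ_eq0 (g \<circ> s) id \<Longrightarrow> w \<in> words S
                 \<Longrightarrow> g \<circ> w \<in> words S"

definition generated_by :: "(complex^'n \<Rightarrow> complex^'n) set \<Rightarrow> (complex^'n \<Rightarrow> complex^'n) list \<Rightarrow> bool" where
  "generated_by G fs \<longleftrightarrow> (\<forall>g\<in>G. diff0 g) \<and> set fs \<subseteq> G \<and>
     (\<forall>g\<in>G. \<exists>w\<in>words (set fs). germ_eq0 g w) \<and>
     (\<forall>w\<in>words (set fs). \<exists>g\<in>G. germ_eq0 g w)"

definition basic_generators :: "(complex^'n \<Rightarrow> complex^'n) set \<Rightarrow> (complex^'n \<Rightarrow> complex^'n) list \<Rightarrow> bool" where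
  "basic_generators G fs \<longleftrightarrow> fs \<noteq> [] \<and> generated_by G fs \<and>
     germ_eq0 (foldr (\<circ>) fs id) id \<and>
     (\<forall>i<length fs. \<forall>j<length fs. \<exists>h\<in>G. germ_eq0 (fs ! i \<circ> h) (h \<circ> fs ! j))"

definition irreducible_group :: "(complex^'n \<Rightarrow> complex^'n) set \<Rightarrow> bool" where
  "irreducible_group G \<longleftrightarrow> (\<exists>fs. basic_generators G fs)"

end

theory Submission imports Defs "HOL-Complex_Analysis.Complex_Analysis" begin

lemma norm_smult_cvec: "norm (c *s (x::complex^'n)) = cmod c * norm x"
proof -
  have "norm (c *s x) = L2_set (\<lambda>i. cmod c * norm (x$i)) UNIV"
    unfolding norm_vec_def by (simp add: norm_mult)
  also have "\<dots> = cmod c * norm x" unfolding norm_vec_def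
    by (simp add: L2_set_right_distrib)
  finally show ?thesis .
qed

lemma norm_le_l1_cvec: "norm (x::complex^'n) \<le> (\<Sum>i\<in>UNIV. norm (x$i))"
  unfolding norm_vec_def by (rule L2_set_le_sum) auto

lemma comp_bound:
  fixes x :: "complex^'n" and B :: real
  assumes "\<And>i. norm (x$i) \<le> B"
  shows "norm x \<le> CARD('n) * B"
proof -
  have "norm x \<le> (\<Sum>i\<in>UNIV. norm (x$i))" by (rule norm_le_l1_cvec)
  also have "\<dots> \<le> (\<Sum>i\<in>(UNIV::'n set). B)" by (rule sum_mono) (rule assms)
  finally show ?thesis by simp
qed

lemma OV:
  fixes \<phi> :: "complex \<Rightarrow> complex"
  assumes hol: "\<phi> holomorphic_on ball 0 (2*R)" and R: "R > 0"
    and bd: "\<And>t. norm t \<le> R \<Longrightarrow> norm (\<phi> t) \<le> M"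
    and t: "norm t \<le> R/2"
  shows "norm (\<phi> t - (\<Sum>i<k. (deriv ^^ i) \<phi> 0 / fact i * t^i)) \<le> 2*M*(norm t/R)^k"
proof -
  define a where "a i = (deriv ^^ i) \<phi> 0 / fact i" for i
  have tin: "t \<in> ball 0 (2*R)" using t R by simp
  have sums: "(\<lambda>n. a n * t^n) sums \<phi> t"
    using holomorphic_power_series[OF hol tin] by (simp add: a_def)
  have M0: "M \<ge> 0" using bd[of 0] R norm_ge_zero[of "\<phi> 0"] by (simp del: norm_ge_zero)
  have ca: "norm (a n) \<le> M / R^n" for n
  proof -
    have "norm ((deriv ^^ n) \<phi> 0) \<le> fact n * M / R^n"
    proof (rule Cauchy_inequality)
      show "\<phi> holomorphic_on ball 0 R" using R by (intro holomorphic_on_subset[OF hol]) auto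
      show "continuous_on (cball 0 R) \<phi>"
        using R by (intro continuous_on_subset[OF holomorphic_on_imp_continuous_on[OF hol]]) auto
      show "0 < R" by fact
      show "norm (0 - x) = R \<Longrightarrow> norm (\<phi> x) \<le> M" for x using bd[of x] by simp
    qed
    then show ?thesis by (simp add: a_def norm_divide field_simps)
  qed
  have tail: "(\<lambda>n. a (n+k) * t^(n+k)) sums (\<phi> t - (\<Sum>i<k. a i * t^i))"
    using sums_split_initial_segment[OF sums, of k] by simp
  define q where "q = norm t / R"
  have q0: "q \<ge> 0" and q1: "q \<le> 1/2" using t R by (auto simp: q_def field_simps)
  have geo: "(\<lambda>n. M * q^k * q^n) sums (M * q^k * (1 / (1 - q)))"
    using geometric_sums[of q] q0 q1 by (intro sums_mult) auto
  have le: "norm (a (n+k) * t^(n+k)) \<le> M * q^k * q^n" for n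
  proof -
    have "norm (a (n+k) * t^(n+k)) \<le> M / R^(n+k) * norm t^(n+k)"
      unfolding norm_mult norm_power by (rule mult_right_mono[OF ca]) simp
    also have "\<dots> = M * q^k * q^n" using R by (simp add: q_def power_add power_divide field_simps)
    finally show ?thesis .
  qed
  have "norm (\<phi> t - (\<Sum>i<k. a i * t^i)) \<le> M * q^k * (1 / (1 - q))"
    using norm_suminf_le[of "\<lambda>n. a (n+k) * t^(n+k)", OF le] geo tail
    by (auto simp: sums_iff)
  also have "\<dots> \<le> M * q^k * 2"
    using q0 q1 M0 by (intro mult_left_mono) (auto simp: field_simps)
  finally show ?thesis by (simp add: a_def q_def)
qed

lemma bl_smult: "bounded_linear (\<lambda>t::complex. t *s (v::complex^'n))"
  by (rule bounded_linear_intro[where K="norm v"])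
     (auto simp: norm_smult_cvec vec_eq_iff algebra_simps)

lemma ray_deriv:
  fixes F :: "complex^'n \<Rightarrow> complex^'n"
  assumes "(F has_derivative L) (at (z + t *s v))"
    and lin: "\<And>(c::complex) w. L (c *s w) = c *s L w"
  shows "((\<lambda>t. F (z + t *s v) $ j) has_field_derivative (L v $ j)) (at t)"
proof -
  have d1: "((\<lambda>t. z + t *s v) has_derivative (\<lambda>h. h *s v)) (at t)"
    by (rule has_derivative_add_const[where c=z, simplified add.commute])
       (rule bounded_linear_imp_has_derivative[OF bl_smult])
  have d2: "((\<lambda>t. F (z + t *s v)) has_derivative (\<lambda>h. L (h *s v))) (at t)"
    using has_derivative_compose[OF d1 assms(1)] by (simp add: o_def)
  have d3: "((\<lambda>t. F (z + t *s v) $ j) has_derivative (\<lambda>h. L (h *s v) $ j)) (at t)"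
    by (rule bounded_linear.has_derivative[OF bounded_linear_vec_nth d2])
  have "(\<lambda>h. L (h *s v) $ j) = (\<lambda>h. (L v $ j) * h)"
    by (auto simp: lin)
  then show ?thesis using d3 by (simp add: has_field_derivative_def)
qed

lemma ray_holo:
  fixes F :: "complex^'n \<Rightarrow> complex^'n"
  assumes "holo_on F U" and "\<And>t. t \<in> S \<Longrightarrow> z + t *s v \<in> U"
  shows "(\<lambda>t. F (z + t *s v) $ j) holomorphic_on S"
  unfolding holomorphic_on_def field_differentiable_def
proof
  fix t assume "t \<in> S"
  then obtain L where "(F has_derivative L) (at (z + t *s v))" "\<And>(c::complex) w. L (c *s w) = c *s L w"
    using assms unfolding holo_on_def by blast
  from ray_deriv[OF this] show "\<exists>f'. ((\<lambda>t. F (z + t *s v) $ j) has_field_derivative f') (at t within S)"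
    by (blast intro: has_field_derivative_at_within)
qed

lemma holo_cont:
  assumes "holo_on F U" shows "continuous_on U F"
  using assms unfolding holo_on_def
  by (meson continuous_at_imp_continuous_on has_derivative_continuous)

definition coef :: "(complex^'n \<Rightarrow> complex^'n) \<Rightarrow> complex^'n \<Rightarrow> 'n \<Rightarrow> nat \<Rightarrow> complex" where
  "coef F x0 j m = (deriv ^^ m) (\<lambda>t. F (t *s x0) $ j) 0"

definition Zk :: "(complex^'n \<Rightarrow> complex^'n) \<Rightarrow> nat \<Rightarrow> bool" where
  "Zk F k \<longleftrightarrow> (\<forall>x0 j m. norm x0 \<le> 1 \<longrightarrow> m < k \<longrightarrow> coef F x0 j m = 0)"

definition lead :: "(complex^'n \<Rightarrow> complex^'n) \<Rightarrow> nat \<Rightarrow> complex^'n \<Rightarrow> complex^'n" where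
  "lead F k x0 = (\<chi> j. coef F x0 j k / fact k)"

lemma expansion:
  fixes F :: "complex^'n \<Rightarrow> complex^'n"
  assumes hol: "holo_on F (ball 0 \<rho>)" and \<rho>: "\<rho> > 0"
  shows "\<exists>R>0. \<exists>M::real. M \<ge> 0 \<and>
     (\<forall>k x. Zk F k \<longrightarrow> norm x \<le> R/2 \<longrightarrow> norm (F x) \<le> CARD('n) * (2*M) * (norm x/R)^k) \<and>
     (\<forall>k x0 t. Zk F k \<longrightarrow> norm x0 \<le> 1 \<longrightarrow> norm t \<le> R/2 \<longrightarrow>
         norm (F (t *s x0) - t^k *s lead F k x0) \<le> CARD('n) * (2*M) * (norm t/R)^(k+1))"
proof -
  define R where "R = \<rho>/3"
  have R: "R > 0" using \<rho> by (simp add: R_def)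
  have "compact (F ` cball 0 R)"
    using R \<rho> by (intro compact_continuous_image continuous_on_subset[OF holo_cont[OF hol]]) (auto simp: R_def)
  then obtain M where M0: "M > 0" "\<forall>z\<in>F ` cball 0 R. norm z \<le> M"
    using compact_imp_bounded bounded_pos by metis
  then have M: "M > 0" "\<And>y. y \<in> cball 0 R \<Longrightarrow> norm (F y) \<le> M" by auto
  have phol: "(\<lambda>t. F (t *s x0) $ j) holomorphic_on ball 0 (2*R)" if "norm x0 \<le> 1" for x0 j
  proof -
    have "(\<lambda>t. F (0 + t *s x0) $ j) holomorphic_on ball 0 (2*R)"
    proof (rule ray_holo[OF hol])
      fix t :: complex assume "t \<in> ball 0 (2*R)"
      then have "norm (t *s x0) < 2*R" using that R mult_left_le[of "norm x0" "cmod t"]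
        by (simp add: norm_smult_cvec)
      then show "0 + t *s x0 \<in> ball 0 \<rho>" using R by (simp add: R_def)
    qed
    then show ?thesis by simp
  qed
  have pbd: "norm (F (t *s x0) $ j) \<le> M" if "norm x0 \<le> 1" "norm t \<le> R" for x0 j t
  proof -
    have "norm (t *s x0) \<le> R" using that mult_left_le[of "norm x0" "cmod t"]
      by (simp add: norm_smult_cvec)
    then show ?thesis using M(2)[of "t *s x0"] by (intro order_trans[OF Finite_Cartesian_Product.norm_nth_le]) simp
  qed
  have OVa: "norm (F (s *s y) $ jj - (\<Sum>i<kk. coef F y jj i / fact i * s^i)) \<le> 2*M*(norm s/R)^kk"
    if "norm y \<le> 1" "norm s \<le> R/2" for y jj s kk
    using OV[OF phol[OF that(1)] R pbd[OF that(1)] that(2)] by (simp add: coef_def)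
  have A: "norm (F x) \<le> CARD('n) * (2*M) * (norm x/R)^k" if "Zk F k" "norm x \<le> R/2" for k x
  proof (cases "x = 0")
    case True
    have "norm (F (0 *s 0) $ j - 0) \<le> 2*M*(norm (0::complex)/R)^k" for j
      using OVa[where y=0 and jj=j and s=0 and kk=k] R that(1) by (force simp: Zk_def split: if_splits)
    then show ?thesis using M True by (simp add: mult.assoc) (intro comp_bound, simp)
  next
    case False
    define x0 where "x0 = (1 / complex_of_real (norm x)) *s x"
    define t where "t = complex_of_real (norm x)"
    have x0n: "norm x0 \<le> 1" using False by (simp add: x0_def norm_smult_cvec norm_divide)
    have tx: "t *s x0 = x" using False by (simp add: x0_def t_def vector_smult_assoc)
    have "norm (F x $ j) \<le> 2*M*(norm x/R)^k" for j
      using OVa[where y=x0 and jj=j and s=t and kk=k] x0n that tx by (simp add: Zk_def t_def)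
    then show ?thesis using comp_bound[of "F x" "2*M*(norm x/R)^k"] by (simp add: mult.assoc)
  qed
  have B: "norm (F (t *s x0) - t^k *s lead F k x0) \<le> CARD('n) * (2*M) * (norm t/R)^(k+1)"
    if "Zk F k" "norm x0 \<le> 1" "norm t \<le> R/2" for k x0 t
  proof -
    have "norm ((F (t *s x0) - t^k *s lead F k x0) $ j) \<le> 2*M*(norm t/R)^(k+1)" for j
    proof -
      have "(\<Sum>i<Suc k. coef F x0 j i / fact i * t^i) = coef F x0 j k / fact k * t^k"
        using that(1,2) by (simp add: Zk_def)
      then show ?thesis using OVa[where y=x0 and jj=j and s=t and kk="Suc k"] that by (simp add: lead_def mult.commute)
    qed
    then show ?thesis using comp_bound[of "F (t *s x0) - t^k *s lead F k x0" "2*M*(norm t/R)^(k+1)"]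
      by (simp add: mult.assoc)
  qed
  show ?thesis using R M(1) A B by (intro exI[of _ R] exI[of _ M] conjI allI impI) (auto simp del: power_Suc)
qed

lemma deriv_bound:
  fixes F :: "complex^'n \<Rightarrow> complex^'n" and C0 d r0 \<rho> :: real
  assumes hol: "holo_on F (ball 0 \<rho>)"
    and bdF: "\<And>y. norm y < r0 \<Longrightarrow> norm (F y) \<le> C0 * norm y ^ k" and C0: "C0 \<ge> 0"
    and d: "d > 0" "3*d \<le> \<rho>" "2*d < r0" and z: "norm z \<le> d"
    and L: "(F has_derivative L) (at z)" and lin: "\<And>(c::complex) w. L (c *s w) = c *s L w"
    and k: "k \<ge> 1"
  shows "norm (L v) \<le> CARD('n) * C0 * 2^k * d^(k-1) * norm v"
proof (cases "v = 0")
  case True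
  have "linear L" using L has_derivative_linear by blast
  then show ?thesis using True by (simp add: linear_0)
next
  case False
  define u where "u = (1 / complex_of_real (norm v)) *s v"
  have un: "norm u = 1" using False by (simp add: u_def norm_smult_cvec norm_divide)
  have vu: "v = complex_of_real (norm v) *s u" using False by (simp add: u_def vector_smult_assoc)
  have comp: "norm (L u $ j) \<le> C0 * 2^k * d^(k-1)" for j
  proof -
    define \<psi> where "\<psi> t = F (z + t *s u) $ j" for t
    have inb: "norm (z + t *s u) \<le> d + cmod t" for t
      using norm_triangle_ineq[of z "t *s u"] z un by (simp add: norm_smult_cvec)
    have hol2: "\<psi> holomorphic_on ball 0 (2*d)"
      unfolding \<psi>_def
    proof (rule ray_holo[OF hol])
      fix t :: complex assume "t \<in> ball 0 (2*d)"
      then show "z + t *s u \<in> ball 0 \<rho>" using inb[of t] d by simp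
    qed
    have "((\<lambda>t. F (z + t *s u) $ j) has_field_derivative (L u $ j)) (at 0)"
      by (rule ray_deriv) (use L lin in auto)
    then have dpsi: "deriv \<psi> 0 = L u $ j" unfolding \<psi>_def by (rule DERIV_imp_deriv)
    have "norm ((deriv ^^ 1) \<psi> 0) \<le> fact 1 * (C0 * (2*d)^k) / d^1"
    proof (rule Cauchy_inequality)
      show "\<psi> holomorphic_on ball 0 d" using d by (intro holomorphic_on_subset[OF hol2]) auto
      show "continuous_on (cball 0 d) \<psi>"
        using d by (intro continuous_on_subset[OF holomorphic_on_imp_continuous_on[OF hol2]]) auto
      show "0 < d" by fact
      fix t :: complex assume "norm (0 - t) = d"
      then have nt: "norm (z + t *s u) \<le> 2*d" using inb[of t] by simp
      have "norm (\<psi> t) \<le> norm (F (z + t *s u))" unfolding \<psi>_def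
        by (rule Finite_Cartesian_Product.norm_nth_le)
      also have "\<dots> \<le> C0 * norm (z + t *s u) ^ k" using nt d by (intro bdF) simp
      also have "\<dots> \<le> C0 * (2*d)^k" using nt C0 by (intro mult_left_mono power_mono) auto
      finally show "norm (\<psi> t) \<le> C0 * (2*d)^k" .
    qed
    also have "fact 1 * (C0 * (2*d)^k) / d^1 = C0 * 2^k * d^(k-1)"
    proof -
      obtain k' where "k = Suc k'" using k by (cases k) auto
      then show ?thesis using d by (simp add: power_mult_distrib)
    qed
    finally show ?thesis using dpsi by simp
  qed
  have "norm (L u) \<le> CARD('n) * (C0 * 2^k * d^(k-1))" by (rule comp_bound) (rule comp)
  moreover have "L v = complex_of_real (norm v) *s L u" by (subst vu) (rule lin)
  ultimately have "norm (L v) \<le> norm v * (CARD('n) * (C0 * 2^k * d^(k-1)))"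
    by (simp add: norm_smult_cvec mult_left_mono)
  then show ?thesis by (simp add: algebra_simps)
qed

definition ord_ge :: "(complex^'n \<Rightarrow> complex^'n) \<Rightarrow> nat \<Rightarrow> bool" where
  "ord_ge F k \<longleftrightarrow> (\<exists>C r. r > 0 \<and> (\<forall>x. norm x < r \<longrightarrow> norm (F x) \<le> C * norm x ^ k))"

lemma ord_geE:
  assumes "ord_ge F k"
  obtains C r where "C \<ge> 0" "r > 0" "\<And>x. norm x < r \<Longrightarrow> norm (F x) \<le> C * norm x ^ k"
proof -
  obtain C r where "r > 0" "\<And>x. norm x < r \<Longrightarrow> norm (F x) \<le> C * norm x ^ k"
    using assms unfolding ord_ge_def by blast
  moreover have "C * norm x ^ k \<le> max C 0 * norm x ^ k" for x :: "complex^'n"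
    by (intro mult_right_mono) auto
  ultimately have "norm (F x) \<le> max C 0 * norm x ^ k" if "norm x < r" for x
    using that order_trans by blast
  then show ?thesis using that[of "max C 0" r] \<open>r > 0\<close> by force
qed

lemma Lip:
  fixes F :: "complex^'n \<Rightarrow> complex^'n" and \<rho> :: real
  assumes hol: "holo_on F (ball 0 \<rho>)" and \<rho>: "\<rho> > 0" and o: "ord_ge F k" and k: "k \<ge> 1"
  shows "\<exists>C r. r > 0 \<and> (\<forall>a b. norm a < r \<longrightarrow> norm b < r \<longrightarrow>
            norm (F a - F b) \<le> C * (max (norm a) (norm b))^(k-1) * norm (a - b))"
proof -
  obtain C0 r0 where C0: "C0 \<ge> 0" "r0 > 0" "\<And>x. norm x < r0 \<Longrightarrow> norm (F x) \<le> C0 * norm x ^ k"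
    using ord_geE[OF o] by blast
  define r where "r = min \<rho> r0 / 3"
  have r: "r > 0" using \<rho> C0 by (simp add: r_def)
  have main: "norm (F a - F b) \<le> (CARD('n) * C0 * 2^k) * (max (norm a) (norm b))^(k-1) * norm (a - b)"
    if a: "norm a < r" and b: "norm b < r" for a b
  proof (cases "max (norm a) (norm b) = 0")
    case True
    then have "a = 0" "b = 0" by (auto simp: max_def split: if_splits)
    then show ?thesis by simp
  next
    case False
    define d where "d = max (norm a) (norm b)"
    have d: "d > 0" "3*d \<le> \<rho>" "2*d < r0" using False a b r C0 by (auto simp: d_def r_def max_def)
    define L' where "L' z = (SOME L. (F has_derivative L) (at z) \<and> (\<forall>(c::complex) w. L (c *s w) = c *s L w))" for z
    have L': "(F has_derivative L' z) (at z) \<and> (\<forall>(c::complex) w. L' z (c *s w) = c *s L' z w)"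
      if "z \<in> cball 0 d" for z
    proof -
      have "z \<in> ball 0 \<rho>" using that d by simp
      then have "\<exists>L. (F has_derivative L) (at z) \<and> (\<forall>(c::complex) w. L (c *s w) = c *s L w)"
        using hol unfolding holo_on_def by blast
      then show ?thesis unfolding L'_def by (rule someI_ex)
    qed
    have "norm (F a - F b) \<le> (CARD('n) * C0 * 2^k * d^(k-1)) * norm (a - b)"
    proof (rule differentiable_bound[where S="cball (0::complex^'n) d" and f'=L'])
      show "convex (cball (0::complex^'n) d)" by (rule convex_cball)
      show "(F has_derivative L' z) (at z within cball 0 d)" if "z \<in> cball 0 d" for z
        using L'[OF that] by (blast intro: has_derivative_at_withinI)
      show "onorm (L' z) \<le> CARD('n) * C0 * 2^k * d^(k-1)" if "z \<in> cball 0 d" for z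
      proof (rule onorm_le)
        fix v
        show "norm (L' z v) \<le> CARD('n) * C0 * 2^k * d^(k-1) * norm v"
          using L'[OF that] that by (intro deriv_bound[OF hol C0(3) C0(1) d _ _ _ k]) auto
      qed
      show "a \<in> cball 0 d" "b \<in> cball 0 d" by (auto simp: d_def)
    qed
    then show ?thesis by (simp add: d_def)
  qed
  show ?thesis using r main by blast
qed

definition lipk :: "(complex^'n \<Rightarrow> complex^'n) \<Rightarrow> nat \<Rightarrow> bool" where
  "lipk F k \<longleftrightarrow> (\<exists>C r. C \<ge> 0 \<and> r > 0 \<and> (\<forall>a b. norm a < r \<longrightarrow> norm b < r \<longrightarrow>
            norm (F a - F b) \<le> C * (max (norm a) (norm b))^(k-1) * norm (a - b)))"

lemma Lip':
  fixes F :: "complex^'n \<Rightarrow> complex^'n" and \<rho> :: real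
  assumes "holo_on F (ball 0 \<rho>)" "\<rho> > 0" "ord_ge F k" "k \<ge> 1"
  shows "lipk F k"
proof -
  obtain C r where "r > 0" "\<And>a b. norm a < r \<Longrightarrow> norm b < r \<Longrightarrow>
            norm (F a - F b) \<le> C * (max (norm a) (norm b))^(k-1) * norm (a - b)"
    using Lip[OF assms] by blast
  moreover have "C * (max (norm a) (norm b))^(k-1) * norm (a - b) \<le> max C 0 * (max (norm a) (norm b))^(k-1) * norm (a - b)"
    for a b :: "complex^'n"
    by (intro mult_right_mono) (auto intro: zero_le_power order_trans[OF norm_ge_zero max.cobounded1])
  ultimately show ?thesis unfolding lipk_def
    by (rule_tac exI[where x="max C 0"], rule_tac exI[where x=r]) (meson order_trans max.cobounded2)
qed

lemma ord_ge_add: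
  assumes "ord_ge F k" "ord_ge G k" shows "ord_ge (\<lambda>x. F x + G x) k"
proof -
  obtain C1 r1 where 1: "C1 \<ge> 0" "r1 > 0" "\<And>x. norm x < r1 \<Longrightarrow> norm (F x) \<le> C1 * norm x ^ k"
    using ord_geE[OF assms(1)] by blast
  obtain C2 r2 where 2: "C2 \<ge> 0" "r2 > 0" "\<And>x. norm x < r2 \<Longrightarrow> norm (G x) \<le> C2 * norm x ^ k"
    using ord_geE[OF assms(2)] by blast
  have "norm (F x + G x) \<le> (C1 + C2) * norm x ^ k" if "norm x < min r1 r2" for x
    using norm_triangle_ineq[of "F x" "G x"] 1(3)[of x] 2(3)[of x] that by (simp add: algebra_simps)
  then show ?thesis unfolding ord_ge_def using 1 2 by (intro exI[of _ "C1+C2"] exI[of _ "min r1 r2"]) auto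
qed

lemma ord_ge_uminus:
  assumes "ord_ge F k" shows "ord_ge (\<lambda>x. - F x) k"
  using assms unfolding ord_ge_def by simp

lemma ord_ge_diff:
  assumes "ord_ge F k" "ord_ge G k" shows "ord_ge (\<lambda>x. F x - G x) k"
  using ord_ge_add[OF assms(1) ord_ge_uminus[OF assms(2)]] by simp

lemma ord_ge_zero: "ord_ge (\<lambda>x. 0) k"
  unfolding ord_ge_def by (intro exI[of _ 0] exI[of _ 1]) auto

lemma ord_ge_cong:
  assumes "ord_ge G k" "r > 0" "\<And>x. norm x < r \<Longrightarrow> F x = G x"
  shows "ord_ge F k"
proof -
  obtain C1 r1 where 1: "C1 \<ge> 0" "r1 > 0" "\<And>x. norm x < r1 \<Longrightarrow> norm (G x) \<le> C1 * norm x ^ k"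
    using ord_geE[OF assms(1)] by blast
  show ?thesis unfolding ord_ge_def using 1 assms(2,3)
    by (intro exI[of _ C1] exI[of _ "min r r1"]) auto
qed

lemma ord_ge_down:
  assumes "ord_ge F m" "k \<le> m" shows "ord_ge F k"
proof -
  obtain C1 r1 where 1: "C1 \<ge> 0" "r1 > 0" "\<And>x. norm x < r1 \<Longrightarrow> norm (F x) \<le> C1 * norm x ^ m"
    using ord_geE[OF assms(1)] by blast
  have "norm (F x) \<le> C1 * norm x ^ k" if "norm x < min r1 1" for x
  proof -
    have "norm x ^ m \<le> norm x ^ k" using that assms(2) by (intro power_decreasing) auto
    then show ?thesis using 1(3)[of x] that 1(1) by (meson min_less_iff_conj mult_left_mono order_trans)
  qed
  then show ?thesis unfolding ord_ge_def using 1 by (intro exI[of _ C1] exI[of _ "min r1 1"]) auto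
qed

lemma ord_ge_small:
  assumes "ord_ge G k" "k \<ge> 2"
  shows "\<exists>r>0. \<forall>x. norm x < r \<longrightarrow> norm (G x) \<le> norm x"
proof -
  obtain C r where 1: "C \<ge> 0" "r > 0" "\<And>x. norm x < r \<Longrightarrow> norm (G x) \<le> C * norm x ^ k"
    using ord_geE[OF assms(1)] by blast
  define r' where "r' = min r (min 1 (1/(C+1)))"
  have "norm (G x) \<le> norm x" if x: "norm x < r'" for x
  proof -
    have x1: "norm x \<le> 1" "norm x < r" "norm x * (C+1) \<le> 1" using x 1(1)
      by (auto simp: r'_def field_simps) (use mult_nonneg_nonneg[OF 1(1) norm_ge_zero[of x]] in linarith)
    have "norm x ^ k \<le> norm x ^ 2" using x1 assms(2) by (intro power_decreasing) auto
    then have "norm (G x) \<le> C * norm x ^ 2" using 1(3)[OF x1(2)] 1(1) by (meson mult_left_mono order_trans)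
    also have "\<dots> = (C * norm x) * norm x" by (simp add: power2_eq_square)
    also have "\<dots> \<le> 1 * norm x"
    proof (rule mult_right_mono)
      have "norm x * (C+1) = C * norm x + norm x" by (simp add: algebra_simps)
      then show "C * norm x \<le> 1" using x1(3) norm_ge_zero[of x] by linarith
    qed simp
    finally show ?thesis by simp
  qed
  moreover have "r' > 0" using 1 by (simp add: r'_def)
  ultimately show ?thesis by blast
qed

lemma LipComp:
  assumes L: "lipk F k" and k: "k \<ge> 1" and P: "ord_ge (\<lambda>x. P x - x) j" and j: "j \<ge> 2"
  shows "ord_ge (\<lambda>x. F (P x) - F x) (k - 1 + j)"
proof -
  obtain C r where C: "C \<ge> 0" "r > 0" and lip: "\<And>a b. norm a < r \<Longrightarrow> norm b < r \<Longrightarrow>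
            norm (F a - F b) \<le> C * (max (norm a) (norm b))^(k-1) * norm (a - b)"
    using L unfolding lipk_def by blast
  obtain Cp rp where Cp: "Cp \<ge> 0" "rp > 0" "\<And>x. norm x < rp \<Longrightarrow> norm (P x - x) \<le> Cp * norm x ^ j"
    using ord_geE[OF P] by blast
  obtain rs where rs: "rs > 0" "\<And>x. norm x < rs \<Longrightarrow> norm (P x - x) \<le> norm x"
    using ord_ge_small[OF P j] by blast
  define r' where "r' = min (r/2) (min rp rs)"
  have "norm (F (P x) - F x) \<le> (C * 2^(k-1) * Cp) * norm x ^ (k - 1 + j)" if x: "norm x < r'" for x
  proof -
    have Px: "norm (P x) \<le> 2 * norm x" using rs(2)[of x] x norm_triangle_ineq[of "P x - x" x]
      by (simp add: r'_def)
    have mx: "max (norm (P x)) (norm x) \<le> 2 * norm x" using Px by simp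
    have "norm (F (P x) - F x) \<le> C * (max (norm (P x)) (norm x))^(k-1) * norm (P x - x)"
    proof (rule lip)
      have "norm x * 2 < r" using x by (simp add: r'_def)
      then show "norm x < r" "norm (P x) < r" using Px norm_ge_zero[of x] by linarith+
    qed
    also have "\<dots> \<le> C * (2 * norm x)^(k-1) * (Cp * norm x ^ j)"
      using C Cp(3)[of x] x mx
      by (intro mult_mono mult_left_mono power_mono) (auto simp: r'_def le_max_iff_disj)
    also have "\<dots> = (C * 2^(k-1) * Cp) * norm x ^ (k - 1 + j)"
      by (simp add: power_mult_distrib power_add)
    finally show ?thesis .
  qed
  moreover have "r' > 0" using C Cp rs by (simp add: r'_def)
  ultimately show ?thesis unfolding ord_ge_def by blast
qed

lemma Zk_ord:
  fixes F :: "complex^'n \<Rightarrow> complex^'n"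
  assumes "holo_on F (ball 0 \<rho>)" "\<rho> > 0" "Zk F k"
  shows "ord_ge F k"
proof -
  obtain R M :: real where RM: "R > 0" "M \<ge> 0"
    "\<And>k x. Zk F k \<Longrightarrow> norm x \<le> R/2 \<Longrightarrow> norm (F x) \<le> CARD('n) * (2*M) * (norm x/R)^k"
    using expansion[OF assms(1,2)] by blast
  have "norm (F x) \<le> (CARD('n) * (2*M) / R^k) * norm x ^ k" if "norm x < R/2" for x
    using RM(3)[OF assms(3), of x] that by (simp add: power_divide)
  then show ?thesis unfolding ord_ge_def using RM(1)
    by (rule_tac exI[where x="CARD('n) * (2*M) / R^k"], rule_tac exI[where x="R/2"]) auto
qed

lemma conj_lemma:
  fixes F F' H :: "complex^'n \<Rightarrow> complex^'n"
  assumes k: "k \<ge> 2" and LF: "lipk F k" and LH: "lipk H 2"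
    and oF': "ord_ge F' k" and oH: "ord_ge H 2" and oF: "ord_ge F k"
    and r: "r > 0" and eq: "\<And>x. norm x < r \<Longrightarrow> F' x = H x + F (x + H x) - H (x + F' x)"
  shows "ord_ge (\<lambda>x. F' x - F x) (k+1)"
proof -
  have "ord_ge (\<lambda>x. F (x + H x) - F x) (k - 1 + 2)"
    using LipComp[OF LF _ _ order_refl, of "\<lambda>x. x + H x"] k oH by simp
  moreover have "k - 1 + 2 = k + 1" using k by simp
  ultimately have 1: "ord_ge (\<lambda>x. F (x + H x) - F x) (k + 1)" by simp
  have "ord_ge (\<lambda>x. H (x + F' x) - H x) (2 - 1 + k)"
    using LipComp[OF LH _ _ k, of "\<lambda>x. x + F' x"] oF' by simp
  then have 2: "ord_ge (\<lambda>x. H (x + F' x) - H x) (k + 1)" by simp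
  have "ord_ge (\<lambda>x. (F (x + H x) - F x) - (H (x + F' x) - H x)) (k+1)"
    using ord_ge_diff[OF 1 2] by simp
  then show ?thesis
  proof (rule ord_ge_cong[OF _ r])
    fix x :: "complex^'n" assume x: "norm x < r"
    define a where "a = F' x"
    have e: "a = H x + F (x + H x) - H (x + a)" using eq[OF x] unfolding a_def by simp
    have "a - F x - ((F (x + H x) - F x) - (H (x + a) - H x)) = a - (H x + F (x + H x) - H (x + a))"
      by (simp add: algebra_simps)
    also have "\<dots> = 0" by (simp only: e[symmetric] diff_self)
    finally have "a - F x = (F (x + H x) - F x) - (H (x + a) - H x)"
      by (simp only: right_minus_eq)
    then show "F' x - F x = F (x + H x) - F x - (H (x + F' x) - H x)"
      unfolding a_def .
  qed
qed

lemma comp_list: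
  fixes fs :: "(complex^'n \<Rightarrow> complex^'n) list"
  assumes "\<And>f. f \<in> set fs \<Longrightarrow> lipk (\<lambda>x. f x - x) k \<and> ord_ge (\<lambda>x. f x - x) k" and k: "k \<ge> 2"
  shows "ord_ge (\<lambda>x. foldr (\<circ>) fs id x - x) k \<and>
         ord_ge (\<lambda>x. foldr (\<circ>) fs id x - x - (\<Sum>f\<leftarrow>fs. f x - x)) (k+1)"
  using assms(1)
proof (induction fs)
  case Nil
  have z: "\<And>k. ord_ge (\<lambda>x::complex^'n. 0::complex^'n) k" by (rule ord_ge_zero)
  show ?case by (simp add: z)
next
  case (Cons f fs)
  define P where "P = foldr (\<circ>) fs id"
  have "ord_ge (\<lambda>x. foldr (\<circ>) fs id x - x) k \<and>
         ord_ge (\<lambda>x. foldr (\<circ>) fs id x - x - (\<Sum>f\<leftarrow>fs. f x - x)) (k+1)"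
    by (rule Cons.IH) (use Cons.prems in auto)
  then have IH: "ord_ge (\<lambda>x. P x - x) k" "ord_ge (\<lambda>x. P x - x - (\<Sum>f\<leftarrow>fs. f x - x)) (k+1)"
    unfolding P_def by blast+
  have Ff: "lipk (\<lambda>x. f x - x) k" "ord_ge (\<lambda>x. f x - x) k" using Cons.prems by auto
  have L: "ord_ge (\<lambda>x. (f (P x) - P x) - (f x - x)) (k - 1 + k)"
    using LipComp[OF Ff(1) _ IH(1) k] k by simp
  have L1: "ord_ge (\<lambda>x. (f (P x) - P x) - (f x - x)) k"
    by (rule ord_ge_down[OF L]) (use k in simp)
  have L2: "ord_ge (\<lambda>x. (f (P x) - P x) - (f x - x)) (k+1)"
    by (rule ord_ge_down[OF L]) (use k in simp)
  have A: "ord_ge (\<lambda>x. f (P x) - x) k"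
    using ord_ge_add[OF ord_ge_add[OF L1 Ff(2)] IH(1)] by (simp add: algebra_simps)
  have B: "ord_ge (\<lambda>x. f (P x) - x - ((f x - x) + (\<Sum>f\<leftarrow>fs. f x - x))) (k+1)"
    using ord_ge_add[OF L2 IH(2)] by (simp add: algebra_simps)
  have fo: "\<And>x. foldr (\<circ>) (f#fs) id x = f (P x)" by (simp add: P_def)
  have su: "\<And>x. (\<Sum>g\<leftarrow>f#fs. g x - x) = (f x - x) + (\<Sum>g\<leftarrow>fs. g x - x)" by simp
  show ?case using A B by (simp only: fo su)
qed

lemma germ_deriv:
  assumes "germ_eq0 f g" "(g has_derivative L) (at 0)"
  shows "(f has_derivative L) (at 0)"
proof -
  obtain S where S: "open S" "0 \<in> S" "\<And>x. x \<in> S \<Longrightarrow> f x = g x"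
    using assms(1) unfolding germ_eq_def eventually_nhds by blast
  show ?thesis by (rule has_derivative_transform_within_open[OF assms(2) S(1,2)]) (simp add: S(3))
qed

lemma germ_eq_ball:
  assumes "germ_eq0 f g" obtains r where "r > 0" "\<And>x. norm x < r \<Longrightarrow> f x = g x"
  using assms unfolding germ_eq_def eventually_nhds_metric by (auto simp: dist_norm)

lemma holo_near0_ball:
  assumes "holo_near0 f" obtains \<rho> where "\<rho> > 0" "holo_on f (ball 0 \<rho>)"
proof -
  obtain U where U: "open U" "0 \<in> U" "holo_on f U" using assms unfolding holo_near0_def by blast
  then obtain e where "e > 0" "ball 0 e \<subseteq> U" using open_contains_ball by blast
  then show ?thesis using that[of e] U(3) unfolding holo_on_def by blast
qed

lemma holo_deriv0:
  assumes "holo_near0 f" obtains L where "(f has_derivative L) (at 0)"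
proof -
  obtain \<rho> where "\<rho> > 0" "holo_on f (ball 0 \<rho>)" using holo_near0_ball[OF assms] by blast
  then show ?thesis using that unfolding holo_on_def by (meson centre_in_ball)
qed

lemma holo_minus_id:
  assumes "holo_on f U" shows "holo_on (\<lambda>x. f x - x) U"
  unfolding holo_on_def
proof
  fix x assume "x \<in> U"
  then obtain L where L: "(f has_derivative L) (at x)" "\<And>(c::complex) w. L (c *s w) = c *s L w"
    using assms unfolding holo_on_def by blast
  have "((\<lambda>x. f x - x) has_derivative (\<lambda>h. L h - h)) (at x)"
    by (intro has_derivative_diff L(1) has_derivative_ident)
  moreover have "L (c *s w) - c *s w = c *s (L w - w)" for c :: complex and w
    by (simp add: L(2) vector_ssub_ldistrib)
  ultimately show "\<exists>L. ((\<lambda>x. f x - x) has_derivative L) (at x) \<and> (\<forall>(c::complex) w. L (c *s w) = c *s L w)"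
    by blast
qed

lemma Zk2:
  fixes F :: "complex^'n \<Rightarrow> complex^'n"
  assumes F0: "F 0 = 0" and D: "(F has_derivative (\<lambda>h. 0)) (at 0)"
  shows "Zk F 2"
  unfolding Zk_def
proof (intro allI impI)
  fix x0 :: "complex^'n" and j m assume "norm x0 \<le> 1" "m < (2::nat)"
  then have "m = 0 \<or> m = 1" by auto
  then show "coef F x0 j m = 0"
  proof
    assume "m = 0" then show ?thesis by (simp add: coef_def F0)
  next
    assume m: "m = 1"
    have "((\<lambda>t. F (0 + t *s x0) $ j) has_field_derivative ((\<lambda>h. 0) x0 $ j)) (at 0)"
      by (rule ray_deriv) (use D in auto)
    then have "deriv (\<lambda>t. F (t *s x0) $ j) 0 = 0" by (simp add: DERIV_imp_deriv)
    then show ?thesis by (simp add: coef_def m)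
  qed
qed

lemma Zk_mono: "Zk F k \<Longrightarrow> k' \<le> k \<Longrightarrow> Zk F k'"
  unfolding Zk_def by auto

lemma comp0:
  assumes "(g has_derivative Lg) (at 0)" "(f has_derivative Lf) (at 0)" "g 0 = 0"
  shows "((f \<circ> g) has_derivative (Lf \<circ> Lg)) (at 0)"
  using has_derivative_compose[OF assms(1), of f Lf] assms(2,3) by (simp add: o_def)

lemma diff0_right_inv:
  assumes "diff0 h" "(h has_derivative Lh) (at 0)"
  shows "\<exists>Lg. \<forall>v. Lh (Lg v) = v"
proof -
  obtain g where g: "g 0 = 0" "holo_near0 g" "germ_eq0 (h \<circ> g) id"
    using assms(1) unfolding diff0_def by blast
  obtain Lg where Lg: "(g has_derivative Lg) (at 0)" using holo_deriv0[OF g(2)] by blast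
  have 1: "((h \<circ> g) has_derivative (Lh \<circ> Lg)) (at 0)" using comp0[OF Lg assms(2) g(1)] .
  have 2: "((h \<circ> g) has_derivative id) (at 0)"
    using germ_deriv[OF g(3)] has_derivative_ident by (simp add: id_def)
  have "Lh \<circ> Lg = id" using has_derivative_unique[OF 1 2] .
  then show ?thesis by (metis comp_apply id_apply)
qed

lemma conj_deriv:
  assumes f: "(f has_derivative Lf) (at 0)" and h: "(h has_derivative Lh) (at 0)" "h 0 = 0"
    and f': "(f' has_derivative id) (at 0)" "f' 0 = 0"
    and eq: "germ_eq0 (f \<circ> h) (h \<circ> f')" and inv: "\<forall>v. Lh (Lg v) = v"
  shows "Lf = id"
proof -
  have 1: "((f \<circ> h) has_derivative (Lf \<circ> Lh)) (at 0)" using comp0[OF h(1) f h(2)] .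
  have "((h \<circ> f') has_derivative (Lh \<circ> id)) (at 0)" using comp0[OF f'(1) h(1) f'(2)] .
  then have 2: "((f \<circ> h) has_derivative (Lh \<circ> id)) (at 0)" by (rule germ_deriv[OF eq])
  have "Lf \<circ> Lh = Lh \<circ> id" using has_derivative_unique[OF 1 2] .
  then have "Lf (Lh (Lg v)) = Lh (Lg v)" for v by (metis comp_apply id_apply)
  then show ?thesis using inv by (auto simp: fun_eq_iff)
qed

lemma words_deriv:
  assumes "w \<in> words S" and S: "\<And>s. s \<in> S \<Longrightarrow> s 0 = 0 \<and> (s has_derivative id) (at 0)"
  shows "w 0 = 0 \<and> (w has_derivative id) (at 0)"
  using assms(1)
proof induction
  case words_id
  then show ?case by (simp add: has_derivative_ident[unfolded id_def[symmetric]])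
next
  case (words_gen s w)
  have "((s \<circ> w) has_derivative (id \<circ> id)) (at 0)"
    using comp0[of w id s id] words_gen S by blast
  then show ?case using words_gen S by (simp add: o_def id_def)
next
  case (words_inv s g w)
  obtain Lg where Lg: "(g has_derivative Lg) (at 0)"
    using holo_deriv0 words_inv(2) unfolding diff0_def by blast
  have g0: "g 0 = 0" using words_inv(2) unfolding diff0_def by blast
  have 1: "((g \<circ> s) has_derivative (Lg \<circ> id)) (at 0)" using comp0[OF _ Lg, of s id] S words_inv by blast
  have 2: "((g \<circ> s) has_derivative id) (at 0)"
    using germ_deriv[OF words_inv(3)] has_derivative_ident by (simp add: id_def)
  have "Lg = id" using has_derivative_unique[OF 1 2] by simp
  then have "((g \<circ> w) has_derivative (id \<circ> id)) (at 0)" using comp0[of w id g id] words_inv Lg by blast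
  then show ?case using words_inv g0 by (simp add: o_def id_def)
qed

lemma words_germ_id:
  assumes "w \<in> words S" and S: "\<And>s. s \<in> S \<Longrightarrow> germ_eq0 s id"
  shows "germ_eq0 w id"
  using assms(1)
proof induction
  case words_id
  then show ?case by (simp add: germ_eq_def)
next
  case (words_gen s w)
  have "\<forall>\<^sub>F x in nhds 0. w x = x" "\<forall>\<^sub>F x in nhds 0. s x = x"
    using words_gen S by (auto simp: germ_eq_def)
  then have "\<forall>\<^sub>F x in nhds 0. s (w x) = x" by eventually_elim simp
  then show ?case by (simp add: germ_eq_def)
next
  case (words_inv s g w)
  have "\<forall>\<^sub>F x in nhds 0. w x = x" "\<forall>\<^sub>F x in nhds 0. s x = x" "\<forall>\<^sub>F x in nhds 0. g (s x) = x"
    using words_inv S by (auto simp: germ_eq_def)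
  then have "\<forall>\<^sub>F x in nhds 0. g (w x) = x" by eventually_elim simp
  then show ?case by (simp add: germ_eq_def)
qed

definition LD :: "complex^'n \<Rightarrow> nat \<Rightarrow> (complex^'n \<Rightarrow> complex^'n) \<Rightarrow> complex^'n \<Rightarrow> bool" where
  "LD x0 k D A \<longleftrightarrow> (\<exists>c \<delta>. \<delta> > 0 \<and> (\<forall>t::complex. norm t < \<delta> \<longrightarrow>
      norm (D (t *s x0) - t^k *s A) \<le> c * norm t ^ (k+1)))"

lemma LD_add:
  assumes "LD x0 k D A" "LD x0 k E B" shows "LD x0 k (\<lambda>x. D x + E x) (A + B)"
proof -
  obtain c1 d1 where 1: "d1 > 0" "\<And>t. norm t < d1 \<Longrightarrow> norm (D (t *s x0) - t^k *s A) \<le> c1 * norm t ^ (k+1)"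
    using assms(1) unfolding LD_def by blast
  obtain c2 d2 where 2: "d2 > 0" "\<And>t. norm t < d2 \<Longrightarrow> norm (E (t *s x0) - t^k *s B) \<le> c2 * norm t ^ (k+1)"
    using assms(2) unfolding LD_def by blast
  have "norm (D (t *s x0) + E (t *s x0) - t^k *s (A + B)) \<le> (c1 + c2) * norm t ^ (k+1)"
    if "norm t < min d1 d2" for t
  proof -
    have "D (t *s x0) + E (t *s x0) - t^k *s (A + B) = (D (t *s x0) - t^k *s A) + (E (t *s x0) - t^k *s B)"
      by (simp add: vector_add_ldistrib algebra_simps)
    then show ?thesis using norm_triangle_ineq[of "D (t *s x0) - t^k *s A" "E (t *s x0) - t^k *s B"]
      1(2)[of t] 2(2)[of t] that by (simp add: algebra_simps)
  qed
  then show ?thesis unfolding LD_def using 1 2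
    by (rule_tac exI[where x="c1+c2"], rule_tac exI[where x="min d1 d2"]) auto
qed

lemma LD_uminus:
  assumes "LD x0 k D A" shows "LD x0 k (\<lambda>x. - D x) (- A)"
proof -
  have "- D y - t^k *s (- A) = - (D y - t^k *s A)" for y t by (simp add: vector_smult_rneg)
  then show ?thesis using assms unfolding LD_def by (metis norm_minus_cancel)
qed

lemma LD_diff:
  assumes "LD x0 k D A" "LD x0 k E B" shows "LD x0 k (\<lambda>x. D x - E x) (A - B)"
  using LD_add[OF assms(1) LD_uminus[OF assms(2)]] by simp

lemma LD_zero: "LD x0 k (\<lambda>x. 0) 0"
  unfolding LD_def by (rule_tac exI[where x=0], rule_tac exI[where x=1]) auto

lemma LD_sum_list:
  assumes "\<And>f. f \<in> set fs \<Longrightarrow> LD x0 k (D f) (A f)"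
  shows "LD x0 k (\<lambda>x. \<Sum>f\<leftarrow>fs. D f x) (\<Sum>f\<leftarrow>fs. A f)"
  using assms
proof (induction fs)
  case Nil
  then show ?case using LD_zero by simp
next
  case (Cons f fs)
  then show ?case using LD_add[of x0 k "D f" "A f"] by simp
qed

lemma ord_LD:
  assumes "ord_ge D (k+1)" "norm x0 \<le> 1" shows "LD x0 k D 0"
proof -
  obtain C r where C: "C \<ge> 0" "r > 0" "\<And>x. norm x < r \<Longrightarrow> norm (D x) \<le> C * norm x ^ (k+1)"
    using ord_geE[OF assms(1)] by blast
  have "norm (D (t *s x0)) \<le> C * norm t ^ (k+1)" if "norm t < r" for t :: complex
  proof -
    have n: "norm (t *s x0) \<le> norm t" using assms(2) mult_left_le[of "norm x0" "cmod t"]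
      by (simp add: norm_smult_cvec)
    then have "norm (D (t *s x0)) \<le> C * norm (t *s x0) ^ (k+1)" using that by (intro C(3)) simp
    also have "\<dots> \<le> C * norm t ^ (k+1)" using n C(1) by (intro mult_left_mono power_mono) auto
    finally show ?thesis .
  qed
  then show ?thesis unfolding LD_def using C
    by (rule_tac exI[where x=C], rule_tac exI[where x=r]) auto
qed

lemma LD_unique:
  assumes "LD x0 k D A" "LD x0 k D B" shows "A = B"
proof (rule ccontr)
  assume ne: "A \<noteq> B"
  obtain c d where cd: "d > 0" "\<And>t. norm t < d \<Longrightarrow> norm (D (t *s x0) - D (t *s x0) - t^k *s (A - B)) \<le> c * norm t ^ (k+1)"
    using LD_diff[OF assms] unfolding LD_def by blast
  define e where "e = norm (A - B)"
  have e: "e > 0" using ne by (simp add: e_def)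
  define t where "t = min (d/2) (e / (2 * (\<bar>c\<bar> + 1)))"
  have t3: "t \<le> e / (2 * (\<bar>c\<bar> + 1))" unfolding t_def by (rule min.cobounded2)
  have pos: "0 < 2 * (\<bar>c\<bar> + 1)" by simp
  have t2: "t \<le> d/2" unfolding t_def by (rule min.cobounded1)
  have t: "t > 0" "t < d" "t * (2 * (\<bar>c\<bar> + 1)) \<le> e"
    using cd(1) e apply (simp add: t_def)
    using t2 cd(1) apply linarith
    using t3 pos_le_divide_eq[OF pos] by blast
  have "norm (complex_of_real t) < d" using t by simp
  from cd(2)[OF this] have h: "norm (D (complex_of_real t *s x0) - D (complex_of_real t *s x0)
      - (complex_of_real t)^k *s (A - B)) \<le> c * norm (complex_of_real t) ^ (k+1)" .
  have "norm (D (complex_of_real t *s x0) - D (complex_of_real t *s x0)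
      - (complex_of_real t)^k *s (A - B)) = t^k * e"
    using t(1) by (simp only: diff_self diff_0 norm_minus_cancel norm_smult_cvec norm_power e_def norm_of_real)
  then have "t^k * e \<le> c * t^(k+1)" using h t(1) by simp
  then have "t^k * e \<le> t^k * (c * t)" by (simp add: algebra_simps)
  then have "e \<le> c * t" using t(1) by (simp add: mult_le_cancel_left_pos)
  moreover have "c * t < e"
  proof -
    have "c * t \<le> \<bar>c\<bar> * t" using t(1) by (intro mult_right_mono) auto
    also have "\<dots> < (2 * (\<bar>c\<bar> + 1)) * t" using t(1) by (intro mult_strict_right_mono) auto
    also have "\<dots> \<le> e" using t(3) by (simp add: algebra_simps)
    finally show ?thesis .
  qed
  ultimately show False by simp
qed

lemma expansion_LD:
  fixes F :: "complex^'n \<Rightarrow> complex^'n"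
  assumes "holo_on F (ball 0 \<rho>)" "\<rho> > 0" "Zk F k" "norm x0 \<le> 1"
  shows "LD x0 k F (lead F k x0)"
proof -
  obtain R M :: real where RM: "R > 0" "M \<ge> 0"
    "\<And>k x0 t. Zk F k \<Longrightarrow> norm x0 \<le> 1 \<Longrightarrow> norm t \<le> R/2 \<Longrightarrow>
         norm (F (t *s x0) - t^k *s lead F k x0) \<le> CARD('n) * (2*M) * (norm t/R)^(k+1)"
    using expansion[OF assms(1,2)] by blast
  have "norm (F (t *s x0) - t^k *s lead F k x0) \<le> (CARD('n) * (2*M) / R^(k+1)) * norm t ^ (k+1)"
    if "norm t < R/2" for t
    using RM(3)[OF assms(3,4), of t] that by (simp add: power_divide)
  then show ?thesis unfolding LD_def using RM(1)
    by (rule_tac exI[where x="CARD('n) * (2*M) / R^(k+1)"], rule_tac exI[where x="R/2"]) auto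
qed

lemma sum_list_const_vec: "(\<Sum>x\<leftarrow>xs. (c::complex^'n)) = real (length xs) *\<^sub>R c"
  by (induction xs) (simp_all add: algebra_simps)

lemma diff0_parts: "diff0 f \<Longrightarrow> f 0 = 0" "diff0 f \<Longrightarrow> holo_near0 f"
  unfolding diff0_def by simp_all

theorem proposition2p1:
  fixes G :: "(complex^'n \<Rightarrow> complex^'n) set"
    and fs :: "(complex^'n \<Rightarrow> complex^'n) list"
  assumes "basic_generators G fs"
    and "\<exists>i<length fs. ((fs ! i) has_derivative id) (at 0)"
  shows "\<forall>g\<in>G. germ_eq0 g id"
proof -
  have ne: "fs \<noteq> []" and diffG: "\<And>g. g \<in> G \<Longrightarrow> diff0 g" and sub: "set fs \<subseteq> G"
    and cover: "\<And>g. g \<in> G \<Longrightarrow> \<exists>w\<in>words (set fs). germ_eq0 g w"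
    and prod: "germ_eq0 (foldr (\<circ>) fs id) id"
    and conjc: "\<And>i j. i < length fs \<Longrightarrow> j < length fs \<Longrightarrow> \<exists>h\<in>G. germ_eq0 (fs ! i \<circ> h) (h \<circ> fs ! j)"
    using assms(1) unfolding basic_generators_def generated_by_def by simp_all
  obtain i0 where i0: "i0 < length fs" "((fs ! i0) has_derivative id) (at 0)" using assms(2) by blast
  define f0 where "f0 = fs ! i0"
  have f0s: "f0 \<in> set fs" using i0 by (simp add: f0_def)
  have diff_fs: "\<And>f. f \<in> set fs \<Longrightarrow> diff0 f" using sub diffG by blast
  have fz: "\<And>f. f \<in> set fs \<Longrightarrow> f 0 = 0" using diff_fs diff0_parts(1) by blast
  have conjf: "\<exists>h\<in>G. germ_eq0 (f \<circ> h) (h \<circ> f0)" if fin: "f \<in> set fs" for f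
  proof -
    obtain i where i: "i < length fs" "fs ! i = f" using fin by (auto simp: in_set_conv_nth)
    from conjc[OF i(1) i0(1)] show ?thesis unfolding i(2) f0_def[symmetric] .
  qed
  have Did: "(f has_derivative id) (at 0)" if f: "f \<in> set fs" for f
  proof -
    obtain h where h: "h \<in> G" "germ_eq0 (f \<circ> h) (h \<circ> f0)" using conjf[OF f] by blast
    have dh: "diff0 h" using diffG h(1) by blast
    obtain Lh where Lh: "(h has_derivative Lh) (at 0)" using holo_deriv0[OF diff0_parts(2)[OF dh]] by blast
    obtain Lg where Lg: "\<forall>v. Lh (Lg v) = v" using diff0_right_inv[OF dh Lh] by blast
    obtain Lf where Lf: "(f has_derivative Lf) (at 0)" using holo_deriv0[OF diff0_parts(2)[OF diff_fs[OF f]]] by blast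
    have h0: "h 0 = 0" using diff0_parts(1)[OF dh] .
    have d0: "(f0 has_derivative id) (at 0)" using i0(2) by (simp add: f0_def)
    have "Lf = id"
      by (rule conj_deriv[OF Lf Lh h0 d0 fz[OF f0s] h(2) Lg])
    then show ?thesis using Lf by simp
  qed
  have Gd: "(h has_derivative id) (at 0)" if hG: "h \<in> G" for h
  proof -
    obtain w where w: "w \<in> words (set fs)" "germ_eq0 h w" using cover[OF hG] by blast
    have "w 0 = 0 \<and> (w has_derivative id) (at 0)"
      by (rule words_deriv[OF w(1)]) (simp add: fz Did)
    then show ?thesis using germ_deriv[OF w(2)] by blast
  qed
  show ?thesis
  proof (rule ccontr)
    assume nt: "\<not> (\<forall>g\<in>G. germ_eq0 g id)"
    have "\<exists>f\<in>set fs. \<not> germ_eq0 f id"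
    proof (rule ccontr)
      assume "\<not> (\<exists>f\<in>set fs. \<not> germ_eq0 f id)"
      then have all: "\<And>f. f \<in> set fs \<Longrightarrow> germ_eq0 f id" by blast
      have "germ_eq0 g id" if gG: "g \<in> G" for g
      proof -
        obtain w where w: "w \<in> words (set fs)" "germ_eq0 g w" using cover[OF gG] by blast
        have "germ_eq0 w id" using words_germ_id[OF w(1) all] by blast
        then show ?thesis using w(2) unfolding germ_eq_def
          by (rule eventually_elim2) simp
      qed
      then show False using nt by blast
    qed
    then obtain f1 where f1: "f1 \<in> set fs" "\<not> germ_eq0 f1 id" by blast
    define F where "F f = (\<lambda>x. f x - x)" for f :: "complex^'n \<Rightarrow> complex^'n"
    have holoF: "\<exists>\<rho>>0. holo_on (F f) (ball 0 \<rho>)" if hd: "diff0 f" for f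
    proof -
      obtain \<rho> where "\<rho> > 0" "holo_on f (ball 0 \<rho>)" using holo_near0_ball[OF diff0_parts(2)[OF hd]] by blast
      then show ?thesis unfolding F_def using holo_minus_id by blast
    qed
    have ZF2: "Zk (F f) 2" if hd: "diff0 f" and fd: "(f has_derivative id) (at 0)" for f
    proof (rule Zk2)
      show "F f 0 = 0" using diff0_parts(1)[OF hd] by (simp add: F_def)
      have "((\<lambda>x. f x - x) has_derivative (\<lambda>h. id h - h)) (at 0)"
        by (intro has_derivative_diff fd has_derivative_ident)
      then show "(F f has_derivative (\<lambda>h. 0)) (at 0)" by (simp add: F_def)
    qed
    have Z2: "Zk (F f) 2" if fin: "f \<in> set fs" for f
      using ZF2[OF diff_fs[OF fin] Did[OF fin]] .
    have notall: "\<exists>k. \<not> (\<forall>f\<in>set fs. Zk (F f) k)"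
    proof (rule ccontr)
      assume "\<not> (\<exists>k. \<not> (\<forall>f\<in>set fs. Zk (F f) k))"
      then have allk: "\<And>k. Zk (F f1) k" using f1(1) by blast
      obtain \<rho> where \<rho>: "\<rho> > 0" "holo_on (F f1) (ball 0 \<rho>)" using holoF[OF diff_fs[OF f1(1)]] by blast
      obtain R M :: real where RM: "R > 0" "M \<ge> 0"
        "\<And>k x. Zk (F f1) k \<Longrightarrow> norm x \<le> R/2 \<Longrightarrow> norm (F f1 x) \<le> CARD('n) * (2*M) * (norm x/R)^k"
        using expansion[OF \<rho>(2,1)] by blast
      have "F f1 x = 0" if x: "norm x < R/2" for x
      proof -
        have q: "norm x / R < 1" "0 \<le> norm x / R" using x RM(1) by (auto simp: field_simps)
        have "(\<lambda>k. CARD('n) * (2*M) * (norm x/R)^k) \<longlonglongrightarrow> CARD('n) * (2*M) * 0"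
          by (intro tendsto_mult tendsto_const LIMSEQ_power_zero) (use q in simp)
        then have "norm (F f1 x) \<le> CARD('n) * (2*M) * 0"
          by (rule LIMSEQ_le_const) (use RM(3)[OF allk] x in auto)
        then show ?thesis by simp
      qed
      then have "germ_eq0 f1 id" unfolding germ_eq_def eventually_nhds_metric
        using RM(1) by (rule_tac x="R/2" in exI) (auto simp: F_def dist_norm)
      then show False using f1(2) by blast
    qed
    define K0 where "K0 = (LEAST k. \<not> (\<forall>f\<in>set fs. Zk (F f) k))"
    have K0: "\<not> (\<forall>f\<in>set fs. Zk (F f) K0)" unfolding K0_def using notall by (rule LeastI_ex)
    have K0less: "\<forall>f\<in>set fs. Zk (F f) k" if "k < K0" for k
      using not_less_Least[of k "\<lambda>k. \<not> (\<forall>f\<in>set fs. Zk (F f) k)"] that unfolding K0_def by blast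
    have "K0 > 2"
    proof (rule ccontr)
      assume "\<not> K0 > 2"
      then have "\<forall>f\<in>set fs. Zk (F f) K0" using Z2 Zk_mono by (meson not_less)
      then show False using K0 by blast
    qed
    define k where "k = K0 - 1"
    have k2: "k \<ge> 2" and Kk: "K0 = k + 1" using \<open>K0 > 2\<close> by (auto simp: k_def)
    have Zk_all: "\<And>f. f \<in> set fs \<Longrightarrow> Zk (F f) k" using K0less[of k] Kk by simp
    obtain f2 where f2: "f2 \<in> set fs" "\<not> Zk (F f2) (k+1)" using K0 Kk by blast
    obtain x0 j m where xjm: "norm x0 \<le> 1" "m < k+1" "coef (F f2) x0 j m \<noteq> 0"
      using f2(2) unfolding Zk_def by blast
    have mk: "m = k" using xjm Zk_all[OF f2(1)] unfolding Zk_def by (metis less_Suc_eq Suc_eq_plus1)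
    define A where "A f = lead (F f) k x0" for f
    have A2: "A f2 $ j \<noteq> 0" using xjm mk by (simp add: A_def lead_def)
    have LDf: "LD x0 k (F f) (A f)" if fin: "f \<in> set fs" for f
    proof -
      obtain \<rho> where \<rho>: "\<rho> > 0" "holo_on (F f) (ball 0 \<rho>)" using holoF[OF diff_fs[OF fin]] by blast
      show ?thesis unfolding A_def by (rule expansion_LD[OF \<rho>(2,1) Zk_all[OF fin] xjm(1)])
    qed
    have ordf: "ord_ge (F f) k" if fin: "f \<in> set fs" for f
    proof -
      obtain \<rho> where \<rho>: "\<rho> > 0" "holo_on (F f) (ball 0 \<rho>)" using holoF[OF diff_fs[OF fin]] by blast
      show ?thesis by (rule Zk_ord[OF \<rho>(2,1) Zk_all[OF fin]])
    qed
    have lipf: "lipk (F f) k" if fin: "f \<in> set fs" for f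
    proof -
      obtain \<rho> where \<rho>: "\<rho> > 0" "holo_on (F f) (ball 0 \<rho>)" using holoF[OF diff_fs[OF fin]] by blast
      show ?thesis by (rule Lip'[OF \<rho>(2,1) ordf[OF fin]]) (use k2 in simp)
    qed
    have eqA: "A f = A f0" if fin: "f \<in> set fs" for f
    proof -
      obtain h where h: "h \<in> G" "germ_eq0 (f \<circ> h) (h \<circ> f0)" using conjf[OF fin] by blast
      have dh: "diff0 h" using diffG h(1) by blast
      obtain \<rho> where \<rho>: "\<rho> > 0" "holo_on (F h) (ball 0 \<rho>)" using holoF[OF dh] by blast
      have ZH: "Zk (F h) 2" using ZF2[OF dh Gd[OF h(1)]] .
      have oH: "ord_ge (F h) 2" by (rule Zk_ord[OF \<rho>(2,1) ZH])
      have lH: "lipk (F h) 2" by (rule Lip'[OF \<rho>(2,1) oH]) simp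
      obtain r where r: "r > 0" "\<And>x. norm x < r \<Longrightarrow> (f \<circ> h) x = (h \<circ> f0) x"
        using germ_eq_ball[OF h(2)] by blast
      have "ord_ge (\<lambda>x. F f0 x - F f x) (k+1)"
      proof (rule conj_lemma[OF k2 lipf[OF fin] lH ordf[OF f0s] oH ordf[OF fin] r(1)])
        fix x :: "complex^'n" assume "norm x < r"
        then have e: "f (h x) = h (f0 x)" using r(2) by simp
        show "F f0 x = F h x + F f (x + F h x) - F h (x + F f0 x)"
          by (simp add: F_def e algebra_simps)
      qed
      then have "LD x0 k (\<lambda>x. F f0 x - F f x) 0" by (rule ord_LD[OF _ xjm(1)])
      moreover have "LD x0 k (\<lambda>x. F f0 x - F f x) (A f0 - A f)" by (rule LD_diff[OF LDf[OF f0s] LDf[OF fin]])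
      ultimately have "A f0 - A f = 0" using LD_unique by metis
      then show ?thesis by simp
    qed
    have cl: "ord_ge (\<lambda>x. foldr (\<circ>) fs id x - x - (\<Sum>f\<leftarrow>fs. f x - x)) (k+1)"
      using comp_list[of fs k] lipf ordf k2 unfolding F_def by blast
    obtain r where r: "r > 0" "\<And>x. norm x < r \<Longrightarrow> foldr (\<circ>) fs id x = id x"
      using germ_eq_ball[OF prod] by blast
    have "ord_ge (\<lambda>x. \<Sum>f\<leftarrow>fs. F f x) (k+1)"
    proof (rule ord_ge_cong[OF ord_ge_uminus[OF cl] r(1)])
      fix x :: "complex^'n" assume "norm x < r"
      then show "(\<Sum>f\<leftarrow>fs. F f x) = - (foldr (\<circ>) fs id x - x - (\<Sum>f\<leftarrow>fs. f x - x))"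
        using r(2) by (simp add: F_def)
    qed
    then have "LD x0 k (\<lambda>x. \<Sum>f\<leftarrow>fs. F f x) 0" by (rule ord_LD[OF _ xjm(1)])
    moreover have "LD x0 k (\<lambda>x. \<Sum>f\<leftarrow>fs. F f x) (\<Sum>f\<leftarrow>fs. A f)"
      by (rule LD_sum_list) (rule LDf)
    ultimately have s0: "(\<Sum>f\<leftarrow>fs. A f) = 0" using LD_unique by metis
    have "(\<Sum>f\<leftarrow>fs. A f) = (\<Sum>f\<leftarrow>fs. A f0)"
      by (rule arg_cong[where f=sum_list], rule map_cong) (simp_all add: eqA)
    then have "real (length fs) *\<^sub>R A f0 = 0" using s0 sum_list_const_vec by metis
    then have "A f0 = 0" using ne by simp
    then have "A f2 = 0" using eqA[OF f2(1)] by simp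
    then show False using A2 by simp
  qed
qed

end
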